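(* Fix real numbers $\beta_0,\beta_3,\beta_4$ and a constant $k$. For $(\beta_1,\beta_2)\in\mathbb{R}^2$ let $T$ be the $3\times3$ matrix $$T=\begin{pmatrix}\beta_1&\beta_2&0\\ \beta_3&\beta_4&0\\ 0&0&\beta_0\end{pmatrix},$$ and let $\mathcal{M}(\beta_1,\beta_2)$ be the sum of the two largest eigenvalues of $T^{T}T$. Then the set $\{(\beta_1,\beta_2)\in\mathbb{R}^2:\mathcal{M}(\beta_1,\beta_2)=k\}$ is a connected subset of the union of a circle and an ellipse, both centered at the origin. It consists of the arcs of the circle lying within the ellipse and the arcs of the ellipse lying within the circle.
   Context: For a Group 2 two-qubit $X$-state, or a Mermin (grid) hyperplane-state sharing its correlation operators, the correlation matrix $\beta$ (with entries the coefficients of the operators $\sigma_i\otimes\sigma_j$, $\sigma_i,\sigma_j\in\{X,Y,Z\}$) can be brought, by permuting rows and columns, to the form $T$ above. Here $\beta_0$ is the coefficient of the distinguished correlation operator and $\beta_1,\dots,\beta_4$ are the remaining four correlation coefficients. The states are not required to be valid (positive semidefinite). The quantity $\mathcal{M}$ is the Horodecki Bell-violation quantity: the sum of the two largest eigenvalues of $\beta^T\beta$. *)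

theory Defs
  imports "Jordan_Normal_Form.Char_Poly"
begin

definition eigenvalues_mset :: "real mat \<Rightarrow> real multiset" where
  "eigenvalues_mset A = proots (char_poly A)"

definition sum_two_largest_eigenvalues :: "real mat \<Rightarrow> real" where
  "sum_two_largest_eigenvalues A =
     (let ev = rev (sorted_list_of_multiset (eigenvalues_mset A)) in ev ! 0 + ev ! 1)"

definition horodecki_M :: "real mat \<Rightarrow> real" where
  "horodecki_M B = sum_two_largest_eigenvalues (transpose_mat B * B)"

definition T_mat :: "real \<Rightarrow> real \<Rightarrow> real \<Rightarrow> real \<Rightarrow> real \<Rightarrow> real mat" where
  "T_mat b0 b1 b2 b3 b4 =
     mat_of_rows_list 3 [[b1, b2, 0], [b3, b4, 0], [0, 0, b0]]"

definition circle0 :: "real \<Rightarrow> (real \<times> real) set" where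
  "circle0 r = {(x, y). x\<^sup>2 + y\<^sup>2 = r\<^sup>2}"

definition disk0 :: "real \<Rightarrow> (real \<times> real) set" where
  "disk0 r = {(x, y). x\<^sup>2 + y\<^sup>2 \<le> r\<^sup>2}"

text \<open>(Possibly degenerate) ellipse centred at the origin: image of the unit circle
  under the linear map with matrix [[a,b],[c,d]]; and the closed region it bounds
  (image of the closed unit disk).\<close>
definition ellipse0 :: "real \<Rightarrow> real \<Rightarrow> real \<Rightarrow> real \<Rightarrow> (real \<times> real) set" where
  "ellipse0 a b c d = {(a * u + b * v, c * u + d * v) | u v. u\<^sup>2 + v\<^sup>2 = 1}"

definition filled_ellipse0 :: "real \<Rightarrow> real \<Rightarrow> real \<Rightarrow> real \<Rightarrow> (real \<times> real) set" where
  "filled_ellipse0 a b c d = {(a * u + b * v, c * u + d * v) | u v. u\<^sup>2 + v\<^sup>2 \<le> 1}"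

end

theory Submission
  imports Defs "HOL-Analysis.Analysis"
begin

lemma det1: assumes "(A :: 'a :: comm_ring_1 mat) \<in> carrier_mat 1 1" shows "Determinant.det A = A $$ (0,0)"
  using laplace_expansion_column[OF assms, of 0] assms
  by (simp add: cofactor_def mat_delete_def)
lemma det2: assumes "(A :: 'a :: comm_ring_1 mat) \<in> carrier_mat 2 2" shows "Determinant.det A = A $$ (0,0) * A $$ (1,1) - A $$ (0,1) * A $$ (1,0)"
  using laplace_expansion_column[OF assms, of 1] assms
  apply (simp add: cofactor_def numeral_2_eq_2 lessThan_Suc)
  apply (subst (1 2) det1)
  apply (auto simp: mat_delete_def insert_index_def)
  done
lemma det3: assumes "(A :: 'a :: comm_ring_1 mat) \<in> carrier_mat 3 3" shows "Determinant.det A = 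
  A $$ (0,0) * (A $$ (1,1) * A $$ (2,2) - A $$ (1,2) * A $$ (2,1))
 - A $$ (1,0) * (A $$ (0,1) * A $$ (2,2) - A $$ (0,2) * A $$ (2,1))
 + A $$ (2,0) * (A $$ (0,1) * A $$ (1,2) - A $$ (0,2) * A $$ (1,1))"
  using laplace_expansion_column[OF assms, of 0] assms
  apply (simp add: cofactor_def numeral_3_eq_3 lessThan_Suc)
  apply (subst (1 2 3) det2)
  apply (auto simp: mat_delete_def insert_index_def algebra_simps numeral_2_eq_2)
  done


lemma a: "[:-L,1:] * [:-l,1:] = [:L*l, -(L+l), 1::real:]" by (simp add: mult_pCons_left mult_pCons_right algebra_simps)
lemma b: fixes b1 b2 b3 b4 b0 :: real shows "([:0,1:] + [:-(b1\<^sup>2 + b3\<^sup>2):]) * (([:0,1:] + [:-(b2\<^sup>2 + b4\<^sup>2):]) * ([:0,1:] + [:-(b0\<^sup>2):]))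
      - [:-(b1*b2 + b3*b4):] * ([:-(b1*b2 + b3*b4):] * ([:0,1:] + [:-(b0\<^sup>2):]))
 = [:(b1*b4 - b2*b3)\<^sup>2, -(b1\<^sup>2+b2\<^sup>2+b3\<^sup>2+b4\<^sup>2), 1:] * [:-(b0\<^sup>2),1:]"
proof -
  have e: "([:0,1:] + [:-(b1\<^sup>2 + b3\<^sup>2):]) * ([:0,1:] + [:-(b2\<^sup>2 + b4\<^sup>2):]) - [:-(b1*b2 + b3*b4):] * [:-(b1*b2 + b3*b4):]
     = [:(b1*b4 - b2*b3)\<^sup>2, -(b1\<^sup>2+b2\<^sup>2+b3\<^sup>2+b4\<^sup>2), 1:]"
    by (simp add: mult_pCons_left mult_pCons_right power2_eq_square algebra_simps)
  have d: "[:0,1:] + [:-(b0\<^sup>2):] = [:-(b0\<^sup>2),1::real:]" by simp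
  show ?thesis
    by (simp only: left_diff_distrib mult.assoc[symmetric] e[symmetric] d)
qed
lemma c: "proots ([:-L,1:] * [:-l,1:] * [:-(c::real),1:]) = {#L, l, c#}"
  apply (subst proots_mult, simp, simp)+
  by simp

lemma two_largest3: "(let ev = rev (sorted_list_of_multiset {#x, y, z::real#}) in ev ! 0 + ev ! 1) = x + y + z - min x (min y z)"
  by (auto simp: Let_def split: if_splits simp: min_def)

lemma M_formula:
  fixes b0 b1 b2 b3 b4 :: real
  defines "p \<equiv> b1\<^sup>2+b2\<^sup>2+b3\<^sup>2+b4\<^sup>2" and "q \<equiv> (b1*b4 - b2*b3)\<^sup>2"
  defines "L \<equiv> (p + sqrt (p\<^sup>2 - 4*q))/2" and "l \<equiv> (p - sqrt (p\<^sup>2 - 4*q))/2"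
  shows "horodecki_M (T_mat b0 b1 b2 b3 b4) = L + max l (b0\<^sup>2)"
proof -
  let ?T = "T_mat b0 b1 b2 b3 b4"
  let ?B = "transpose_mat ?T * ?T"
  have Tm: "?T = Matrix.mat 3 3 (\<lambda>(i,j). [[b1, b2, 0], [b3, b4, 0], [0, 0, b0]] ! i ! j)"
    unfolding T_mat_def mat_of_rows_list_def by (simp add: numeral_3_eq_3)
  have Tc: "?T \<in> carrier_mat 3 3" unfolding Tm by (rule mat_carrier)
  have Bc: "?B \<in> carrier_mat 3 3" using Tc by (intro mult_carrier_mat[of _ 3 3]) auto
  have Tent: "?T $$ (i,j) = [[b1, b2, 0], [b3, b4, 0], [0, 0, b0]] ! i ! j" if "i < 3" "j < 3" for i j
    unfolding Tm using that by simp
  have Bent: "?B $$ (i,j) = (\<Sum>k<3. ?T $$ (k,i) * ?T $$ (k,j))" if "i < 3" "j < 3" for i j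
    using that Tc by (simp add: scalar_prod_def lessThan_atLeast0)
  have B: "?B $$ (0,0) = b1\<^sup>2 + b3\<^sup>2" "?B $$ (1,1) = b2\<^sup>2 + b4\<^sup>2" "?B $$ (2,2) = b0\<^sup>2"
     "?B $$ (0,1) = b1*b2 + b3*b4" "?B $$ (1,0) = b1*b2 + b3*b4"
     "?B $$ (0,2) = 0" "?B $$ (2,0) = 0" "?B $$ (1,2) = 0" "?B $$ (2,1) = 0"
    by (subst Bent; simp add: Tent numeral_3_eq_3 lessThan_Suc power2_eq_square)+
  have disc: "p\<^sup>2 - 4*q = (b1\<^sup>2 + b3\<^sup>2 - b2\<^sup>2 - b4\<^sup>2)\<^sup>2 + 4 * (b1*b2 + b3*b4)\<^sup>2"
    unfolding p_def q_def by (simp add: power2_eq_square algebra_simps)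
  have D0: "p\<^sup>2 - 4*q \<ge> 0" unfolding disc by simp
  have sq: "(sqrt (p\<^sup>2 - 4*q))\<^sup>2 = p\<^sup>2 - 4*q" using D0 by simp
  have Ll1: "L + l = p" unfolding L_def l_def by (simp add: field_simps)
  have "L * l = (p\<^sup>2 - (sqrt (p\<^sup>2 - 4*q))\<^sup>2)/4" unfolding L_def l_def
    by (simp add: power2_eq_square field_simps)
  then have Ll2: "L * l = q" unfolding sq by simp
  note Ll = Ll1 Ll2
  have CM: "char_poly_matrix ?B $$ (i,j) = (if i = j then [:0,1:] else 0) + [:- (?B $$ (i,j)):]"
    if "i < 3" "j < 3" for i j
    using that Bc unfolding char_poly_matrix_def by auto
  have cp: "char_poly ?B = [:-L,1:] * [:-l,1:] * [:-(b0\<^sup>2),1:]"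
  proof -
    have "char_poly ?B = ([:0,1:] + [:-(b1\<^sup>2 + b3\<^sup>2):]) * (([:0,1:] + [:-(b2\<^sup>2 + b4\<^sup>2):]) * ([:0,1:] + [:-(b0\<^sup>2):]))
      - [:-(b1*b2 + b3*b4):] * ([:-(b1*b2 + b3*b4):] * ([:0,1:] + [:-(b0\<^sup>2):]))"
      unfolding char_poly_def
      apply (subst det3)
      using Bc apply simp
      using Bc by (simp add: CM B[simplified])
    also have "\<dots> = [:-L,1:] * [:-l,1:] * [:-(b0\<^sup>2),1:]"
    proof -
      have "[:-L,1:] * [:-l,1:] = [:L*l, -(L+l), 1:]" by (rule a)
      also have "\<dots> = [:q, -p, 1:]" unfolding Ll ..
      finally have h1: "[:-L,1:] * [:-l,1:] = [:q, -p, 1:]" .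
      show ?thesis unfolding h1 p_def q_def by (rule b)
    qed
    finally show ?thesis .
  qed
  have "eigenvalues_mset ?B = {#L, l, b0\<^sup>2#}"
    unfolding eigenvalues_mset_def cp by (rule c)
  moreover have "l \<le> L" using D0 unfolding L_def l_def by simp
  ultimately show ?thesis
    unfolding horodecki_M_def sum_two_largest_eigenvalues_def two_largest3
    by (simp add: min_def max_def)
qed

lemma core_iff:
  fixes L l p c k :: real
  assumes "L + l = p"
  shows "L + max l c = k \<longleftrightarrow> (p = k \<and> L \<le> k - c) \<or> (L = k - c \<and> p \<le> k)"
  using assms by (auto simp: max_def)

lemma L_le_iff:
  fixes p q m :: real
  assumes "p\<^sup>2 - 4*q \<ge> 0"
  shows "(p + sqrt (p\<^sup>2 - 4*q))/2 \<le> m \<longleftrightarrow> p \<le> 2*m \<and> m\<^sup>2 - m*p + q \<ge> 0"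
proof -
  have "(p + sqrt (p\<^sup>2 - 4*q))/2 \<le> m \<longleftrightarrow> sqrt (p\<^sup>2 - 4*q) \<le> 2*m - p" by auto
  also have "\<dots> \<longleftrightarrow> p \<le> 2*m \<and> p\<^sup>2 - 4*q \<le> (2*m - p)\<^sup>2"
  proof (cases "p \<le> 2*m")
    case True
    then show ?thesis using real_sqrt_le_iff[of "p\<^sup>2 - 4*q" "(2*m-p)\<^sup>2"] by simp
  next
    case False
    then show ?thesis using real_sqrt_ge_zero[OF assms] by linarith
  qed
  also have "\<dots> \<longleftrightarrow> p \<le> 2*m \<and> m\<^sup>2 - m*p + q \<ge> 0" by (auto simp: power2_eq_square algebra_simps)
  finally show ?thesis .
qed

lemma L_eq_iff:
  fixes p q m :: real
  assumes "p\<^sup>2 - 4*q \<ge> 0"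
  shows "(p + sqrt (p\<^sup>2 - 4*q))/2 = m \<longleftrightarrow> p \<le> 2*m \<and> m\<^sup>2 - m*p + q = 0"
proof -
  have "(p + sqrt (p\<^sup>2 - 4*q))/2 = m \<longleftrightarrow> sqrt (p\<^sup>2 - 4*q) = 2*m - p" by auto
  also have "\<dots> \<longleftrightarrow> p \<le> 2*m \<and> p\<^sup>2 - 4*q = (2*m - p)\<^sup>2"
  proof (cases "p \<le> 2*m")
    case True
    then show ?thesis using real_sqrt_eq_iff[of "p\<^sup>2 - 4*q" "(2*m-p)\<^sup>2"] by simp
  next
    case False
    then show ?thesis using real_sqrt_ge_zero[OF assms] by linarith
  qed
  also have "\<dots> \<longleftrightarrow> p \<le> 2*m \<and> m\<^sup>2 - m*p + q = 0" by (auto simp: power2_eq_square algebra_simps)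
  finally show ?thesis .
qed

lemma L_ge_n:
  fixes x y n :: real
  assumes "n \<ge> 0"
  defines "p \<equiv> x\<^sup>2 + y\<^sup>2 + n" and "q \<equiv> n * y\<^sup>2"
  shows "p\<^sup>2 - 4*q \<ge> 0" "n \<le> (p + sqrt (p\<^sup>2 - 4*q))/2"
proof -
  have e: "p\<^sup>2 - 4*q = (2*n - p)\<^sup>2 + 4*n*x\<^sup>2" unfolding p_def q_def by (simp add: power2_eq_square algebra_simps)
  show "p\<^sup>2 - 4*q \<ge> 0" unfolding e using assms by simp
  have "\<bar>2*n - p\<bar> \<le> sqrt (p\<^sup>2 - 4*q)"
    unfolding e using assms by (intro real_le_rsqrt) (simp add: power2_abs)
  then have "2*n - p \<le> sqrt (p\<^sup>2 - 4*q)" using abs_ge_self[of "2*n-p"] by linarith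
  then show "n \<le> (p + sqrt (p\<^sup>2 - 4*q))/2" by (simp add: field_simps)
qed




definition LEc :: "real \<Rightarrow> real \<Rightarrow> real \<Rightarrow> real \<Rightarrow> bool" where
  "LEc n m x y \<longleftrightarrow> x\<^sup>2 + y\<^sup>2 + n \<le> 2*m \<and> m\<^sup>2 - m*(x\<^sup>2 + y\<^sup>2 + n) + n*y\<^sup>2 \<ge> 0"
definition EQc :: "real \<Rightarrow> real \<Rightarrow> real \<Rightarrow> real \<Rightarrow> bool" where
  "EQc n m x y \<longleftrightarrow> x\<^sup>2 + y\<^sup>2 + n \<le> 2*m \<and> m\<^sup>2 - m*(x\<^sup>2 + y\<^sup>2 + n) + n*y\<^sup>2 = 0"

lemma key_id: "m\<^sup>2 - m*(x\<^sup>2 + y\<^sup>2 + n) + n*y\<^sup>2 = m*(m-n) - m*x\<^sup>2 - (m-n)*y\<^sup>2" for m n x y :: real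
  by (simp add: algebra_simps power2_eq_square)

lemma LEc_G:
  assumes "0 \<le> n" "n < m"
  shows "LEc n m x y \<longleftrightarrow> x\<^sup>2/(m-n) + y\<^sup>2/m \<le> 1"
    and "EQc n m x y \<longleftrightarrow> x\<^sup>2/(m-n) + y\<^sup>2/m = 1"
proof -
  have mn: "m - n > 0" "m > 0" using assms by auto
  have G: "x\<^sup>2/(m-n) + y\<^sup>2/m = (m*x\<^sup>2 + (m-n)*y\<^sup>2) / (m*(m-n))"
    using mn by (simp add: field_simps)
  have Gle: "x\<^sup>2/(m-n) + y\<^sup>2/m \<le> 1 \<longleftrightarrow> m*x\<^sup>2 + (m-n)*y\<^sup>2 \<le> m*(m-n)"
    unfolding G using mn by (simp add: pos_divide_le_eq)
  have Geq: "x\<^sup>2/(m-n) + y\<^sup>2/m = 1 \<longleftrightarrow> m*x\<^sup>2 + (m-n)*y\<^sup>2 = m*(m-n)"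
    unfolding G using mn by (simp add: divide_eq_eq)
  have bound: "x\<^sup>2 + y\<^sup>2 + n \<le> 2*m" if "m*x\<^sup>2 + (m-n)*y\<^sup>2 \<le> m*(m-n)"
  proof -
    have "x\<^sup>2/(m-n) + y\<^sup>2/m \<le> 1" using Gle that by simp
    moreover have "x\<^sup>2/(m-n) \<ge> 0" "y\<^sup>2/m \<ge> 0" using mn by auto
    ultimately have "x\<^sup>2/(m-n) \<le> 1" "y\<^sup>2/m \<le> 1" by linarith+
    then have "x\<^sup>2 \<le> m-n" "y\<^sup>2 \<le> m" using mn by (simp_all add: divide_le_eq)
    then show ?thesis by linarith
  qed
  show "LEc n m x y \<longleftrightarrow> x\<^sup>2/(m-n) + y\<^sup>2/m \<le> 1"
    unfolding LEc_def key_id Gle using bound by auto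
  show "EQc n m x y \<longleftrightarrow> x\<^sup>2/(m-n) + y\<^sup>2/m = 1"
    unfolding EQc_def key_id Geq using bound by auto
qed

lemma LEc_param:
  assumes "0 \<le> n" "n \<le> m"
  shows "LEc n m x y \<longleftrightarrow> (\<exists>u t. u\<^sup>2 + t\<^sup>2 \<le> 1 \<and> x = sqrt (m-n) * u \<and> y = sqrt m * t)"
    and "EQc n m x y \<longleftrightarrow> (\<exists>u t. u\<^sup>2 + t\<^sup>2 = 1 \<and> x = sqrt (m-n) * u \<and> y = sqrt m * t)"
proof -
  have m0: "m \<ge> 0" using assms by linarith
  have bk: "m\<^sup>2 - m*(x\<^sup>2 + y\<^sup>2 + n) + n*y\<^sup>2 = m*(m-n)*(1 - u\<^sup>2 - t\<^sup>2) \<and> x\<^sup>2 + y\<^sup>2 + n \<le> 2*m"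
    if "u\<^sup>2 + t\<^sup>2 \<le> 1" "x = sqrt (m-n) * u" "y = sqrt m * t" for u t
  proof
    have x2: "x\<^sup>2 = (m-n)*u\<^sup>2" using that assms by (simp add: power_mult_distrib)
    have y2: "y\<^sup>2 = m*t\<^sup>2" using that m0 by (simp add: power_mult_distrib)
    show "m\<^sup>2 - m*(x\<^sup>2 + y\<^sup>2 + n) + n*y\<^sup>2 = m*(m-n)*(1 - u\<^sup>2 - t\<^sup>2)"
      unfolding key_id x2 y2 by (simp add: algebra_simps power2_eq_square)
    have A: "m*u\<^sup>2 + m*t\<^sup>2 \<le> m" using mult_left_le[OF that(1) m0] by (simp add: algebra_simps)
    have B: "(m-n)*u\<^sup>2 = m*u\<^sup>2 - n*u\<^sup>2" by (simp add: algebra_simps)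
    have C: "n*u\<^sup>2 \<ge> 0" using assms by simp
    show "x\<^sup>2 + y\<^sup>2 + n \<le> 2*m" unfolding x2 y2 using A B C assms by linarith
  qed
  have fwd: "\<exists>u t. u\<^sup>2 + t\<^sup>2 \<le> 1 \<and> (EQc n m x y \<longrightarrow> u\<^sup>2 + t\<^sup>2 = 1) \<and> x = sqrt (m-n) * u \<and> y = sqrt m * t"
    if "LEc n m x y"
  proof (cases "n < m")
    case True
    have mn: "m - n > 0" "m > 0" using True assms by auto
    define u where "u = x / sqrt (m-n)"
    define t where "t = y / sqrt m"
    have eq: "u\<^sup>2 + t\<^sup>2 = x\<^sup>2/(m-n) + y\<^sup>2/m" using mn by (simp add: u_def t_def power_divide)
    have xy: "x = sqrt (m-n) * u" "y = sqrt m * t" using mn by (simp_all add: u_def t_def)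
    have le: "u\<^sup>2 + t\<^sup>2 \<le> 1" using eq LEc_G(1)[OF assms(1) True, of x y] that by simp
    have "EQc n m x y \<longrightarrow> u\<^sup>2 + t\<^sup>2 = 1" using eq LEc_G(2)[OF assms(1) True, of x y] by simp
    then show ?thesis using le xy by blast
  next
    case False
    then have mn: "m = n" using assms by auto
    have x0: "x = 0"
    proof (cases "m = 0")
      case True
      then have "x\<^sup>2 + y\<^sup>2 \<le> 0" using that mn unfolding LEc_def by simp
      then have "x\<^sup>2 \<le> 0" using zero_le_power2[of y] by linarith
      then show ?thesis by simp
    next
      case False
      then have "m*x\<^sup>2 \<le> 0" using that mn unfolding LEc_def key_id by simp
      then show ?thesis using False m0 by (simp add: mult_le_0_iff)
    qed
    have y2: "y\<^sup>2 \<le> m" using that mn x0 unfolding LEc_def by simp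
    define t where "t = (if m = 0 then 0 else y / sqrt m)"
    have t2: "t\<^sup>2 \<le> 1" "y = sqrt m * t"
    proof -
      show "t\<^sup>2 \<le> 1" using y2 m0 by (auto simp: t_def power_divide divide_le_eq)
      show "y = sqrt m * t" using y2 m0 by (auto simp: t_def)
    qed
    define u where "u = sqrt (1 - t\<^sup>2)"
    have "u\<^sup>2 + t\<^sup>2 = 1" using t2 by (simp add: u_def)
    then show ?thesis using x0 t2 mn by (intro exI[of _ u] exI[of _ t]) auto
  qed
  show "LEc n m x y \<longleftrightarrow> (\<exists>u t. u\<^sup>2 + t\<^sup>2 \<le> 1 \<and> x = sqrt (m-n) * u \<and> y = sqrt m * t)"
  proof
    assume "LEc n m x y" then show "\<exists>u t. u\<^sup>2 + t\<^sup>2 \<le> 1 \<and> x = sqrt (m-n) * u \<and> y = sqrt m * t"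
      using fwd by blast
  next
    assume "\<exists>u t. u\<^sup>2 + t\<^sup>2 \<le> 1 \<and> x = sqrt (m-n) * u \<and> y = sqrt m * t"
    then obtain u t where ut: "u\<^sup>2 + t\<^sup>2 \<le> 1" "x = sqrt (m-n) * u" "y = sqrt m * t" by blast
    have "m*(m-n)*(1 - u\<^sup>2 - t\<^sup>2) \<ge> 0" using ut(1) assms m0 by simp
    then show "LEc n m x y" using bk[OF ut] unfolding LEc_def by simp
  qed
  show "EQc n m x y \<longleftrightarrow> (\<exists>u t. u\<^sup>2 + t\<^sup>2 = 1 \<and> x = sqrt (m-n) * u \<and> y = sqrt m * t)"
  proof
    assume "EQc n m x y"
    then have "LEc n m x y" unfolding EQc_def LEc_def by simp
    then show "\<exists>u t. u\<^sup>2 + t\<^sup>2 = 1 \<and> x = sqrt (m-n) * u \<and> y = sqrt m * t"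
      using fwd \<open>EQc n m x y\<close> by blast
  next
    assume "\<exists>u t. u\<^sup>2 + t\<^sup>2 = 1 \<and> x = sqrt (m-n) * u \<and> y = sqrt m * t"
    then obtain u t where ut: "u\<^sup>2 + t\<^sup>2 = 1" "x = sqrt (m-n) * u" "y = sqrt m * t" by blast
    then show "EQc n m x y" using bk[of u t] unfolding EQc_def by simp
  qed
qed




lemma norm_pair_sq: "(norm (z::real\<times>real))\<^sup>2 = (fst z)\<^sup>2 + (snd z)\<^sup>2"
  by (cases z) (simp add: norm_Pair)

lemma conn_level:
  fixes R2 \<alpha> \<beta> e1 e2 :: real
  assumes R2: "R2 > 0" and al: "\<alpha> > 0" and be: "\<beta> > 0"
  defines "h \<equiv> \<lambda>z::real\<times>real. max (((fst z)\<^sup>2 + (snd z)\<^sup>2)/R2)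
                 ((fst z*e1 + snd z*e2)\<^sup>2/\<alpha> + (fst z*e2 - snd z*e1)\<^sup>2/\<beta>)"
  shows "connected {z. h z = 1}"
proof -
  have G0: "(fst z*e1 + snd z*e2)\<^sup>2/\<alpha> + (fst z*e2 - snd z*e1)\<^sup>2/\<beta> \<ge> 0" for z
    using al be by simp
  have hge: "h z \<ge> (norm z)\<^sup>2 / R2" for z
    unfolding h_def norm_pair_sq by simp
  have hom: "h (s *\<^sub>R z) = s\<^sup>2 * h z" for s z
  proof -
    have "h (s *\<^sub>R z) = max (s\<^sup>2 * (((fst z)\<^sup>2 + (snd z)\<^sup>2)/R2))
                 (s\<^sup>2 * ((fst z*e1 + snd z*e2)\<^sup>2/\<alpha> + (fst z*e2 - snd z*e1)\<^sup>2/\<beta>))"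
      unfolding h_def by (simp add: power2_eq_square algebra_simps add_divide_distrib)
    also have "\<dots> = s\<^sup>2 * h z" unfolding h_def by (simp add: max_mult_distrib_left)
    finally show ?thesis .
  qed
  have hpos: "h z > 0" if "z \<in> sphere 0 1" for z
  proof -
    have "norm z = 1" using that by simp
    then have "(norm z)\<^sup>2 / R2 > 0" using R2 by simp
    then show ?thesis using hge[of z] by linarith
  qed
  define g where "g = (\<lambda>z. (1 / sqrt (h z)) *\<^sub>R z)"
  have cont_h: "continuous_on UNIV h"
    unfolding h_def using R2 al be by (intro continuous_intros) auto
  have cont: "continuous_on (sphere 0 1) g"
    unfolding g_def
    apply (intro continuous_intros continuous_on_subset[OF cont_h])
    using hpos by (auto simp del: mem_sphere_0) (metis less_irrefl)
  have img: "g ` sphere 0 1 = {z. h z = 1}"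
  proof
    show "g ` sphere 0 1 \<subseteq> {z. h z = 1}"
    proof
      fix w assume "w \<in> g ` sphere 0 1"
      then obtain z where z: "z \<in> sphere 0 1" "w = g z" by blast
      have "h w = (1 / sqrt (h z))\<^sup>2 * h z" unfolding z g_def hom ..
      also have "\<dots> = 1" using hpos[OF z(1)] by (simp add: power_divide)
      finally show "w \<in> {z. h z = 1}" by simp
    qed
  next
    show "{z. h z = 1} \<subseteq> g ` sphere 0 1"
    proof
      fix v assume v: "v \<in> {z. h z = 1}"
      have "v \<noteq> 0"
      proof
        assume "v = 0" then have "h v = 0" unfolding h_def by simp
        then show False using v by simp
      qed
      then have nv: "norm v > 0" by simp
      define z where "z = (1 / norm v) *\<^sub>R v"
      have zs: "z \<in> sphere 0 1" using nv by (simp add: z_def)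
      have hz: "h z = 1 / (norm v)\<^sup>2" using v unfolding z_def hom by (simp add: power_divide)
      have "sqrt (h z) = 1 / norm v" unfolding hz by (simp add: real_sqrt_divide)
      then have "g z = v" using nv by (simp add: g_def z_def)
      then show "v \<in> g ` sphere 0 1" using zs by blast
    qed
  qed
  have "connected (sphere (0::real\<times>real) 1)" by (rule connected_sphere) simp
  then have "connected (g ` sphere 0 1)" using cont by (intro connected_continuous_image)
  then show ?thesis unfolding img .
qed




definition Lfun :: "real \<Rightarrow> real \<Rightarrow> real" where "Lfun p q = (p + sqrt (p\<^sup>2 - 4*q))/2"
definition lfun :: "real \<Rightarrow> real \<Rightarrow> real" where "lfun p q = (p - sqrt (p\<^sup>2 - 4*q))/2"

lemma rot_iff:
  fixes e1 e2 b1 b2 A B :: real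
  assumes e: "e1\<^sup>2 + e2\<^sup>2 = 1"
  shows "((b1, b2) = (A*e1 + B*e2, A*e2 - B*e1)) \<longleftrightarrow> (b1*e1 + b2*e2 = A \<and> b1*e2 - b2*e1 = B)"
proof
  assume "(b1, b2) = (A*e1 + B*e2, A*e2 - B*e1)"
  then have b: "b1 = A*e1 + B*e2" "b2 = A*e2 - B*e1" by auto
  have "b1*e1 + b2*e2 = A*(e1\<^sup>2 + e2\<^sup>2)" unfolding b by (simp add: algebra_simps power2_eq_square)
  moreover have "b1*e2 - b2*e1 = B*(e1\<^sup>2 + e2\<^sup>2)" unfolding b by (simp add: algebra_simps power2_eq_square)
  ultimately show "b1*e1 + b2*e2 = A \<and> b1*e2 - b2*e1 = B" using e by simp
next
  assume h: "b1*e1 + b2*e2 = A \<and> b1*e2 - b2*e1 = B"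
  then have hA: "A = b1*e1 + b2*e2" and hB: "B = b1*e2 - b2*e1" by auto
  have "A*e1 + B*e2 = b1*(e1\<^sup>2 + e2\<^sup>2)" unfolding hA hB by (simp add: algebra_simps power2_eq_square)
  moreover have "A*e2 - B*e1 = b2*(e1\<^sup>2 + e2\<^sup>2)" unfolding hA hB by (simp add: algebra_simps power2_eq_square)
  ultimately show "(b1, b2) = (A*e1 + B*e2, A*e2 - B*e1)" using e by simp
qed

lemma filled_img: "filled_ellipse0 a b c d = (\<lambda>z. (a* fst z + b* snd z, c* fst z + d* snd z)) ` cball 0 1"
proof -
  have "z \<in> cball 0 1 \<longleftrightarrow> (fst z)\<^sup>2 + (snd z)\<^sup>2 \<le> 1" for z :: "real \<times> real"
  proof -
    have "z \<in> cball 0 1 \<longleftrightarrow> norm z \<le> 1" by simp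
    also have "\<dots> \<longleftrightarrow> (norm z)\<^sup>2 \<le> 1" by (simp add: power_le_one_iff)
    finally show ?thesis by (simp add: norm_pair_sq)
  qed
  then show ?thesis unfolding filled_ellipse0_def image_def by force
qed

lemma convex_filled: "convex (filled_ellipse0 a b c d)"
proof -
  have "linear (\<lambda>z::real\<times>real. (a* fst z + b* snd z, c* fst z + d* snd z))"
    unfolding linear_iff by (auto simp: algebra_simps)
  then show ?thesis unfolding filled_img by (intro convex_linear_image convex_cball)
qed

lemma disk_cball: assumes "r \<ge> 0" shows "disk0 r = cball 0 r"
proof -
  have "z \<in> cball 0 r \<longleftrightarrow> (fst z)\<^sup>2 + (snd z)\<^sup>2 \<le> r\<^sup>2" for z :: "real \<times> real"
  proof -
    have "z \<in> cball 0 r \<longleftrightarrow> norm z \<le> r" by simp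
    also have "\<dots> \<longleftrightarrow> (norm z)\<^sup>2 \<le> r\<^sup>2" using assms by (simp add: power_mono_iff)
    finally show ?thesis by (simp add: norm_pair_sq)
  qed
  then show ?thesis unfolding disk0_def by auto
qed

lemma geom:
  fixes b0 b3 b4 k :: real
  defines "S \<equiv> {(b1, b2). Lfun (b1\<^sup>2+b2\<^sup>2+b3\<^sup>2+b4\<^sup>2) ((b1*b4 - b2*b3)\<^sup>2)
                 + max (lfun (b1\<^sup>2+b2\<^sup>2+b3\<^sup>2+b4\<^sup>2) ((b1*b4 - b2*b3)\<^sup>2)) (b0\<^sup>2) = k}"
  shows "connected S \<and>
         (S = {} \<or>
          (\<exists>r a b c d. r > 0 \<and>
             S \<subseteq> circle0 r \<union> ellipse0 a b c d \<and>
             S = (circle0 r \<inter> filled_ellipse0 a b c d) \<union> (ellipse0 a b c d \<inter> disk0 r)))"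
proof -
  define n where "n = b3\<^sup>2 + b4\<^sup>2"
  define m where "m = k - b0\<^sup>2"
  have n0: "n \<ge> 0" unfolding n_def by simp
  define \<rho> where "\<rho> = sqrt n"
  define e1 where "e1 = (if n = 0 then 1 else b3 / \<rho>)"
  define e2 where "e2 = (if n = 0 then 0 else b4 / \<rho>)"
  have \<rho>2: "\<rho>\<^sup>2 = n" unfolding \<rho>_def using n0 by simp
  have e: "e1\<^sup>2 + e2\<^sup>2 = 1"
  proof (cases "n = 0")
    case False
    then have "\<rho>\<^sup>2 > 0" using \<rho>2 n0 by simp
    then show ?thesis using False \<rho>2 unfolding e1_def e2_def n_def
      by (simp add: power_divide add_divide_distrib[symmetric])
  qed (simp add: e1_def e2_def)
  have b34: "b3 = \<rho> * e1" "b4 = \<rho> * e2"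
  proof -
    have "b3 = \<rho> * e1 \<and> b4 = \<rho> * e2"
    proof (cases "n = 0")
      case True
      then have "b3 = 0 \<and> b4 = 0" unfolding n_def by (simp add: add_nonneg_eq_0_iff)
      then show ?thesis using True by (simp add: \<rho>_def)
    next
      case False
      then have "\<rho> \<noteq> 0" unfolding \<rho>_def using n0 by simp
      then show ?thesis using False by (simp add: e1_def e2_def)
    qed
    then show "b3 = \<rho> * e1" "b4 = \<rho> * e2" by auto
  qed
  define X where "X = (\<lambda>b1 b2. b1*e1 + b2*e2)"
  define Y where "Y = (\<lambda>b1 b2. b1*e2 - b2*e1)"
  have XY: "(X b1 b2)\<^sup>2 + (Y b1 b2)\<^sup>2 = b1\<^sup>2 + b2\<^sup>2" for b1 b2
  proof -
    have "(X b1 b2)\<^sup>2 + (Y b1 b2)\<^sup>2 = (b1\<^sup>2 + b2\<^sup>2) * (e1\<^sup>2 + e2\<^sup>2)"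
      unfolding X_def Y_def by (simp add: algebra_simps power2_eq_square)
    then show ?thesis using e by simp
  qed
  have pe: "b1\<^sup>2+b2\<^sup>2+b3\<^sup>2+b4\<^sup>2 = (X b1 b2)\<^sup>2 + (Y b1 b2)\<^sup>2 + n" for b1 b2
    using XY[of b1 b2] unfolding n_def by simp
  have qe: "(b1*b4 - b2*b3)\<^sup>2 = n * (Y b1 b2)\<^sup>2" for b1 b2
  proof -
    have "b1*b4 - b2*b3 = \<rho> * Y b1 b2" unfolding Y_def b34 by (simp add: algebra_simps)
    then show ?thesis using \<rho>2 by (simp add: power_mult_distrib)
  qed
  have pw: "(b1, b2) \<in> S \<longleftrightarrow>
      (b1\<^sup>2 + b2\<^sup>2 = k - n \<and> LEc n m (X b1 b2) (Y b1 b2)) \<or>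
      (EQc n m (X b1 b2) (Y b1 b2) \<and> b1\<^sup>2 + b2\<^sup>2 \<le> k - n)"
   and Lge: "(b1, b2) \<in> S \<Longrightarrow> n \<le> m" for b1 b2
  proof -
    define x where "x = X b1 b2"
    define y where "y = Y b1 b2"
    define p where "p = x\<^sup>2 + y\<^sup>2 + n"
    define q where "q = n * y\<^sup>2"
    have disc: "p\<^sup>2 - 4*q \<ge> 0" and Ln: "n \<le> Lfun p q"
      using L_ge_n[OF n0, of x y] unfolding p_def q_def Lfun_def by auto
    have S': "(b1, b2) \<in> S \<longleftrightarrow> Lfun p q + max (lfun p q) (b0\<^sup>2) = k"
      unfolding S_def p_def q_def x_def y_def pe qe by simp
    have sum: "Lfun p q + lfun p q = p" unfolding Lfun_def lfun_def by (simp add: field_simps)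
    have c: "(b1, b2) \<in> S \<longleftrightarrow> (p = k \<and> Lfun p q \<le> m) \<or> (Lfun p q = m \<and> p \<le> k)"
      unfolding S' core_iff[OF sum] m_def ..
    have "Lfun p q \<le> m \<longleftrightarrow> p \<le> 2*m \<and> m\<^sup>2 - m*p + q \<ge> 0"
      unfolding Lfun_def by (rule L_le_iff[OF disc])
    also have "\<dots> \<longleftrightarrow> LEc n m x y" unfolding LEc_def p_def q_def ..
    finally have le: "Lfun p q \<le> m \<longleftrightarrow> LEc n m x y" .
    have "Lfun p q = m \<longleftrightarrow> p \<le> 2*m \<and> m\<^sup>2 - m*p + q = 0"
      unfolding Lfun_def by (rule L_eq_iff[OF disc])
    also have "\<dots> \<longleftrightarrow> EQc n m x y" unfolding EQc_def p_def q_def ..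
    finally have eq: "Lfun p q = m \<longleftrightarrow> EQc n m x y" .
    have pk: "p = k \<longleftrightarrow> b1\<^sup>2 + b2\<^sup>2 = k - n" "p \<le> k \<longleftrightarrow> b1\<^sup>2 + b2\<^sup>2 \<le> k - n"
      unfolding p_def x_def y_def XY by auto
    show "(b1, b2) \<in> S \<longleftrightarrow>
      (b1\<^sup>2 + b2\<^sup>2 = k - n \<and> LEc n m (X b1 b2) (Y b1 b2)) \<or>
      (EQc n m (X b1 b2) (Y b1 b2) \<and> b1\<^sup>2 + b2\<^sup>2 \<le> k - n)"
      unfolding c le eq pk x_def y_def ..
    show "n \<le> m" if "(b1, b2) \<in> S" using that c Ln by auto
  qed
  show ?thesis
  proof (cases "n \<le> m")
    case False
    have "S = {}"
    proof (rule ccontr)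
      assume "S \<noteq> {}"
      then obtain b1 b2 where "(b1, b2) \<in> S" by auto
      then show False using Lge False by blast
    qed
    then show ?thesis by simp
  next
    case nm: True
    define su where "su = sqrt (m - n)"
    define st where "st = sqrt m"
    define F where "F = filled_ellipse0 (su*e1) (st*e2) (su*e2) (-(st*e1))"
    define E where "E = ellipse0 (su*e1) (st*e2) (su*e2) (-(st*e1))"
    have tupeq: "(su*e1*u + st*e2*t, su*e2*u + -(st*e1)*t) = ((su*u)*e1 + (st*t)*e2, (su*u)*e2 - (st*t)*e1)" for u t
      by (simp add: algebra_simps)
    have memF: "(b1, b2) \<in> F \<longleftrightarrow> LEc n m (X b1 b2) (Y b1 b2)" for b1 b2
    proof -
      have "(b1, b2) \<in> F \<longleftrightarrow> (\<exists>u t. (b1, b2) = ((su*u)*e1 + (st*t)*e2, (su*u)*e2 - (st*t)*e1) \<and> u\<^sup>2 + t\<^sup>2 \<le> 1)"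
        unfolding F_def filled_ellipse0_def mem_Collect_eq tupeq by blast
      also have "\<dots> \<longleftrightarrow> (\<exists>u t. u\<^sup>2 + t\<^sup>2 \<le> 1 \<and> X b1 b2 = su*u \<and> Y b1 b2 = st*t)"
        unfolding rot_iff[OF e] X_def Y_def by blast
      also have "\<dots> \<longleftrightarrow> LEc n m (X b1 b2) (Y b1 b2)"
        unfolding LEc_param(1)[OF n0 nm] su_def st_def by blast
      finally show ?thesis .
    qed
    have memE: "(b1, b2) \<in> E \<longleftrightarrow> EQc n m (X b1 b2) (Y b1 b2)" for b1 b2
    proof -
      have "(b1, b2) \<in> E \<longleftrightarrow> (\<exists>u t. (b1, b2) = ((su*u)*e1 + (st*t)*e2, (su*u)*e2 - (st*t)*e1) \<and> u\<^sup>2 + t\<^sup>2 = 1)"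
        unfolding E_def ellipse0_def mem_Collect_eq tupeq by blast
      also have "\<dots> \<longleftrightarrow> (\<exists>u t. u\<^sup>2 + t\<^sup>2 = 1 \<and> X b1 b2 = su*u \<and> Y b1 b2 = st*t)"
        unfolding rot_iff[OF e] X_def Y_def by blast
      also have "\<dots> \<longleftrightarrow> EQc n m (X b1 b2) (Y b1 b2)"
        unfolding LEc_param(2)[OF n0 nm] su_def st_def by blast
      finally show ?thesis .
    qed
    have b00: "b0\<^sup>2 \<ge> 0" by simp
    show ?thesis
    proof (cases "k = n")
      case kn: True
      have mn: "m = n" using nm kn b00 unfolding m_def by linarith
      have S0: "S = {(0, 0)}"
      proof
        show "S \<subseteq> {(0, 0)}"
        proof
          fix v assume v: "v \<in> S"
          obtain b1 b2 where vb: "v = (b1, b2)" by (cases v)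
          have "b1\<^sup>2 + b2\<^sup>2 \<le> 0" using v pw[of b1 b2] kn unfolding vb by auto
          then have "b1\<^sup>2 \<le> 0" "b2\<^sup>2 \<le> 0" using zero_le_power2[of b1] zero_le_power2[of b2] by linarith+
          then have "b1 = 0 \<and> b2 = 0" by simp
          then show "v \<in> {(0, 0)}" using vb by simp
        qed
        have "LEc n m (X 0 0) (Y 0 0)" unfolding LEc_def X_def Y_def mn using n0
          by (simp add: power2_eq_square)
        then show "{(0, 0)} \<subseteq> S" using pw[of 0 0] kn by simp
      qed
      have ex1: "\<exists>u v. (0::real, 0::real) = (0 * u + 0 * v, 0 * u + 0 * v) \<and> u\<^sup>2 + v\<^sup>2 = (1::real)"
        by (intro exI[of _ 1] exI[of _ 0]) simp
      have E0: "ellipse0 0 0 0 0 = {(0, 0)}" unfolding ellipse0_def using ex1 by auto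
      have F0: "filled_ellipse0 0 0 0 0 = {(0, 0)}" unfolding filled_ellipse0_def
        by (auto intro!: exI[of _ 0])
      have W1: "S = (circle0 1 \<inter> filled_ellipse0 0 0 0 0) \<union> (ellipse0 0 0 0 0 \<inter> disk0 1)"
        unfolding S0 E0 F0 circle0_def disk0_def by auto
      have W2: "S \<subseteq> circle0 1 \<union> ellipse0 0 0 0 0" unfolding S0 E0 by simp
      have W: "(1::real) > 0 \<and> S \<subseteq> circle0 1 \<union> ellipse0 0 0 0 0 \<and>
             S = (circle0 1 \<inter> filled_ellipse0 0 0 0 0) \<union> (ellipse0 0 0 0 0 \<inter> disk0 1)"
        using W1 W2 by simp
      have conn: "connected S" unfolding S0 by simp
      show ?thesis using conn W by blast
    next
      case kn: False
      have kn': "k > n" using kn nm b00 unfolding m_def by linarith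
      define r where "r = sqrt (k - n)"
      have r0: "r > 0" using kn' unfolding r_def by simp
      have r2: "r\<^sup>2 = k - n" using kn' unfolding r_def by simp
      have Seq: "S = (circle0 r \<inter> F) \<union> (E \<inter> disk0 r)"
      proof (rule Set.set_eqI)
        fix v :: "real \<times> real"
        obtain b1 b2 where vb: "v = (b1, b2)" by (cases v)
        show "v \<in> S \<longleftrightarrow> v \<in> (circle0 r \<inter> F) \<union> (E \<inter> disk0 r)"
          unfolding vb Un_iff Int_iff pw memF memE by (auto simp: circle0_def disk0_def r2)
      qed
      have sub: "S \<subseteq> circle0 r \<union> E" unfolding Seq by auto
      have conn: "connected S"
      proof (cases "m = n")
        case mn: True
        have LE_EQ: "LEc n m x y \<longleftrightarrow> EQc n m x y" for x y
        proof -
          have "m\<^sup>2 - m*(x\<^sup>2 + y\<^sup>2 + n) + n*y\<^sup>2 = -(m*x\<^sup>2)" unfolding mn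
            by (simp add: algebra_simps power2_eq_square)
          moreover have "m*x\<^sup>2 \<ge> 0" using n0 mn by simp
          ultimately show ?thesis unfolding LEc_def EQc_def by auto
        qed
        have "S = F \<inter> disk0 r"
        proof (rule Set.set_eqI)
          fix v :: "real \<times> real"
          obtain b1 b2 where vb: "v = (b1, b2)" by (cases v)
          show "v \<in> S \<longleftrightarrow> v \<in> F \<inter> disk0 r"
            unfolding vb Int_iff pw memF LE_EQ by (auto simp: disk0_def r2)
        qed
        moreover have "convex (F \<inter> disk0 r)" unfolding F_def disk_cball[OF less_imp_le[OF r0]]
          by (intro convex_Int convex_filled convex_cball)
        ultimately show ?thesis by (simp add: convex_connected)
      next
        case False
        then have mn: "n < m" using nm by simp
        define h where "h \<equiv> \<lambda>z::real\<times>real. max (((fst z)\<^sup>2 + (snd z)\<^sup>2)/(k-n))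
                 ((fst z*e1 + snd z*e2)\<^sup>2/(m-n) + (fst z*e2 - snd z*e1)\<^sup>2/m)"
        have "S = {z. h z = 1}"
        proof (rule Set.set_eqI)
          fix v :: "real \<times> real"
          obtain b1 b2 where vb: "v = (b1, b2)" by (cases v)
          have kk: "b1\<^sup>2 + b2\<^sup>2 = k - n \<longleftrightarrow> (b1\<^sup>2 + b2\<^sup>2)/(k-n) = 1"
                   "b1\<^sup>2 + b2\<^sup>2 \<le> k - n \<longleftrightarrow> (b1\<^sup>2 + b2\<^sup>2)/(k-n) \<le> 1"
            using kn' by (auto simp: divide_le_eq divide_eq_eq)
          have mx: "(A = 1 \<and> B \<le> 1) \<or> (B = 1 \<and> A \<le> 1) \<longleftrightarrow> max A B = 1" for A B :: real
            by (auto simp: max_def)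
          show "v \<in> S \<longleftrightarrow> v \<in> {z. h z = 1}"
            unfolding vb pw LEc_G[OF n0 mn] kk mx h_def X_def Y_def by simp
        qed
        moreover have "connected {z. h z = 1}" unfolding h_def
          by (rule conn_level) (use mn kn' n0 in auto)
        ultimately show ?thesis by simp
      qed
      show ?thesis
        using conn sub Seq r0 unfolding F_def E_def by blast
    qed
  qed
qed


theorem proposition5:
  fixes b0 b3 b4 k :: real
  defines "S \<equiv> {(b1, b2). horodecki_M (T_mat b0 b1 b2 b3 b4) = k}"
  shows "connected S \<and>
         (S = {} \<or>
          (\<exists>r a b c d. r > 0 \<and>
             S \<subseteq> circle0 r \<union> ellipse0 a b c d \<and>
             S = (circle0 r \<inter> filled_ellipse0 a b c d) \<union> (ellipse0 a b c d \<inter> disk0 r)))"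
proof -
  have eq: "S = {(b1, b2). Lfun (b1\<^sup>2+b2\<^sup>2+b3\<^sup>2+b4\<^sup>2) ((b1*b4 - b2*b3)\<^sup>2)
                 + max (lfun (b1\<^sup>2+b2\<^sup>2+b3\<^sup>2+b4\<^sup>2) ((b1*b4 - b2*b3)\<^sup>2)) (b0\<^sup>2) = k}"
    unfolding S_def M_formula Lfun_def lfun_def ..
  show ?thesis unfolding eq by (rule geom)
qed


end
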